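(* Under $H_0$ and Method $\mathcal{M}$ (with the assumptions of the context), $\frac{N_{1,n}}{N_{0,n}}\to 0$ in probability as $n\to\infty$.
   Context: Two independent i.i.d. data streams $\mathcal{X}\sim f_0$, $\mathcal{Y}\sim f_1$ (this is $H_0$), $f_0\ne f_1$ continuous densities, with $\log(f_0/f_1)$ having finite positive variance under both $f_0$ and $f_1$. Method $\mathcal{M}$: start with one observation from each stream; at step $n$, with $N_{0,n},N_{1,n}$ observations from $\mathcal{X},\mathcal{Y}$ ($N_{0,n}+N_{1,n}=n$), let $U_1,\dots,U_{n_{\max}}$ be the observations of the stream with $n_{\max}=\max\{N_{0,n},N_{1,n}\}$ observations (ties broken by a fair coin); sample next from that stream if $\sum_{i\le n_{\max}}\log\frac{f_0(U_i)}{f_1(U_i)}>0$, from the other stream if it is $<0$, and from either with probability $1/2$ if it is $=0$. *)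

theory Defs
  imports "HOL-Probability.Probability"
begin

definition llr :: "(real \<Rightarrow> real) \<Rightarrow> (real \<Rightarrow> real) \<Rightarrow> real \<Rightarrow> real" where
  "llr f0 f1 u = ln (f0 u / f1 u)"

(* Method M, run on a fixed sample path.
   x j (j = 0,1,...) : observations of stream X (the j+1-th one sampled from X);
   y j               : observations of stream Y;
   c n               : fair coin used at step n to break a tie N_{0,n} = N_{1,n}
                       (c n = 1 means: take stream X as the "max" stream);
   d n               : fair coin used at step n when the LLR sum is exactly 0
                       (d n = 1 means: sample from the max stream).
   method_state ... k = (N_{0,n}, N_{1,n}) at step n = k + 2
   (the method starts at n = 2 with one observation from each stream). *)
fun method_state ::
  "(real \<Rightarrow> real) \<Rightarrow> (real \<Rightarrow> real) \<Rightarrow> (nat \<Rightarrow> real) \<Rightarrow> (nat \<Rightarrow> real)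
   \<Rightarrow> (nat \<Rightarrow> real) \<Rightarrow> (nat \<Rightarrow> real) \<Rightarrow> nat \<Rightarrow> nat \<times> nat" where
  "method_state f0 f1 x y c d 0 = (1, 1)"
| "method_state f0 f1 x y c d (Suc k) =
     (let (a, b) = method_state f0 f1 x y c d k;
          n = a + b;
          i = (if a > b then (0::nat) else if b > a then 1 else if c n = 1 then 0 else 1);
          S = (if i = 0 then (\<Sum>j<a. llr f0 f1 (x j)) else (\<Sum>j<b. llr f0 f1 (y j)));
          nxt = (if S > 0 then i else if S < 0 then 1 - i else if d n = 1 then i else 1 - i)
      in if nxt = 0 then (a + 1, b) else (a, b + 1))"

(* (N_{0,n}, N_{1,n}) at step n (meaningful for n \<ge> 2). *)
definition method_counts ::
  "(real \<Rightarrow> real) \<Rightarrow> (real \<Rightarrow> real) \<Rightarrow> (nat \<Rightarrow> real) \<Rightarrow> (nat \<Rightarrow> real)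
   \<Rightarrow> (nat \<Rightarrow> real) \<Rightarrow> (nat \<Rightarrow> real) \<Rightarrow> nat \<Rightarrow> nat \<times> nat" where
  "method_counts f0 f1 x y c d n = method_state f0 f1 x y c d (n - 2)"

(* Labels of the four independent families of random variables. *)
datatype src = SrcX | SrcY | SrcC | SrcD

definition is_density :: "(real \<Rightarrow> real) \<Rightarrow> bool" where
  "is_density f \<longleftrightarrow> (\<forall>x. 0 \<le> f x) \<and> f \<in> borel_measurable borel
      \<and> (\<integral>\<^sup>+ x. ennreal (f x) \<partial>lborel) = 1"

end

theory Submission
  imports Defs
begin


lemma sqrt_block: "\<exists>r::nat. r\<^sup>2 \<le> m \<and> m < (Suc r)\<^sup>2"
proof (induction m)
  case 0 then show ?case by (intro exI[of _ 0]) auto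
next
  case (Suc m)
  then obtain r where r: "r\<^sup>2 \<le> m" "m < (Suc r)\<^sup>2" by blast
  show ?case
  proof (cases "Suc m < (Suc r)\<^sup>2")
    case True then show ?thesis using r by (intro exI[of _ r]) auto
  next
    case False
    then have "Suc m = (Suc r)\<^sup>2" using r by linarith
    moreover have "(Suc r)\<^sup>2 < (Suc (Suc r))\<^sup>2" by (simp add: power2_eq_square)
    ultimately show ?thesis by (intro exI[of _ "Suc r"]) auto
  qed
qed

lemma summable_inv_sq_shift: "summable (\<lambda>n. c / (real n)\<^sup>2)"
proof -
  have "summable (\<lambda>n. 1 / real ((n + 1)\<^sup>2))"
    using inverse_squares_sums sums_summable by blast
  then have "summable (\<lambda>n. 1 / (real (Suc n))\<^sup>2)" by (simp only: Suc_eq_plus1 of_nat_power)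
  then have "summable (\<lambda>n. 1 / (real n)\<^sup>2)" by (rule summable_Suc_iff[THEN iffD1])
  then have "summable (\<lambda>n. c * (1 / (real n)\<^sup>2))" by (rule summable_mult)
  then show ?thesis by simp
qed

lemma (in prob_space) indep_sets_reindex:
  assumes "indep_sets F I" "inj_on g J" "g ` J \<subseteq> I"
  shows "indep_sets (\<lambda>j. F (g j)) J"
  unfolding indep_sets_def
proof (intro conjI ballI allI impI)
  fix j assume "j \<in> J" then show "F (g j) \<subseteq> events" using assms unfolding indep_sets_def by auto
next
  fix J' A assume J': "J' \<subseteq> J" "J' \<noteq> {}" "finite J'" and A: "A \<in> Pi J' (\<lambda>j. F (g j))"
  define B where "B = (\<lambda>i. A (the_inv_into J' g i))"
  have inj': "inj_on g J'" using assms(2) J' inj_on_subset by blast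
  have Bg: "\<And>j. j \<in> J' \<Longrightarrow> B (g j) = A j" unfolding B_def using inj' the_inv_into_f_f by fastforce
  have "B \<in> Pi (g ` J') F" using A Bg by auto
  moreover have "g ` J' \<subseteq> I" "g ` J' \<noteq> {}" "finite (g ` J')" using J' assms by auto
  ultimately have "prob (\<Inter>i\<in>g ` J'. B i) = (\<Prod>i\<in>g ` J'. prob (B i))"
    using assms(1) unfolding indep_sets_def by blast
  moreover have "(\<Inter>i\<in>g ` J'. B i) = (\<Inter>j\<in>J'. A j)" using Bg by auto
  moreover have "(\<Prod>i\<in>g ` J'. prob (B i)) = (\<Prod>j\<in>J'. prob (A j))"
    using prod.reindex[OF inj', of "\<lambda>i. prob (B i)"] Bg by simp
  ultimately show "prob (\<Inter>j\<in>J'. A j) = (\<Prod>j\<in>J'. prob (A j))" by simp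
qed

lemma (in prob_space) indep_vars_reindex:
  assumes "indep_vars M' X I" "inj_on g J" "g ` J \<subseteq> I"
  shows "indep_vars (\<lambda>j. M' (g j)) (\<lambda>j. X (g j)) J"
  using assms indep_sets_reindex[of "\<lambda>i. { X i -` A \<inter> space M | A. A \<in> sets (M' i)}" I g J]
  unfolding indep_vars_def2 by auto

lemma (in prob_space) sum_sq_moment:
  fixes W :: "nat \<Rightarrow> 'a \<Rightarrow> real" and v :: real
  assumes ind: "indep_vars (\<lambda>_. borel) W UNIV"
    and sq: "\<And>j. integrable M (\<lambda>\<omega>. (W j \<omega>)\<^sup>2)"
    and e0: "\<And>j. expectation (W j) = 0"
    and ev: "\<And>j. expectation (\<lambda>\<omega>. (W j \<omega>)\<^sup>2) = v"
    and fin: "finite I"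
  shows "integrable M (\<lambda>\<omega>. (\<Sum>j\<in>I. W j \<omega>)\<^sup>2) \<and> expectation (\<lambda>\<omega>. (\<Sum>j\<in>I. W j \<omega>)\<^sup>2) = card I * v"
proof -
  have rv[measurable]: "\<And>j. random_variable borel (W j)" using ind unfolding indep_vars_def by auto
  have int: "\<And>j. integrable M (W j)"
    using sq square_integrable_imp_integrable rv by blast
  have pair: "integrable M (\<lambda>\<omega>. W i \<omega> * W j \<omega>) \<and> expectation (\<lambda>\<omega>. W i \<omega> * W j \<omega>) = (if i = j then v else 0)" for i j
  proof (cases "i = j")
    case True then show ?thesis using sq ev by (simp add: power2_eq_square)
  next
    case False
    have ij: "indep_vars (\<lambda>_. borel) W {i, j}" using indep_vars_subset[OF ind] by auto
    have "(\<lambda>\<omega>. W i \<omega> * W j \<omega>) = (\<lambda>\<omega>. \<Prod>k\<in>{i,j}. W k \<omega>)" using False by auto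
    then show ?thesis
      using indep_vars_lebesgue_integral[OF _ ij] indep_vars_integrable[OF _ ij] int e0 False by auto
  qed
  have exp: "(\<lambda>\<omega>. (\<Sum>j\<in>I. W j \<omega>)\<^sup>2) = (\<lambda>\<omega>. \<Sum>i\<in>I. \<Sum>j\<in>I. W i \<omega> * W j \<omega>)"
    by (simp add: power2_eq_square sum_product)
  have "integrable M (\<lambda>\<omega>. \<Sum>i\<in>I. \<Sum>j\<in>I. W i \<omega> * W j \<omega>)" using pair by auto
  moreover have "expectation (\<lambda>\<omega>. \<Sum>i\<in>I. \<Sum>j\<in>I. W i \<omega> * W j \<omega>) = (\<Sum>i\<in>I. \<Sum>j\<in>I. if i = j then v else 0)"
    using pair by (simp add: Bochner_Integration.integral_sum)
  moreover have "(\<Sum>i\<in>I. \<Sum>j\<in>I. if i = j then v else 0) = card I * v" using fin by simp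
  ultimately show ?thesis unfolding exp by simp
qed

lemma (in prob_space) sum_cheb:
  fixes W :: "nat \<Rightarrow> 'a \<Rightarrow> real" and v :: real
  assumes ind: "indep_vars (\<lambda>_. borel) W UNIV"
    and sq: "\<And>j. integrable M (\<lambda>\<omega>. (W j \<omega>)\<^sup>2)"
    and e0: "\<And>j. expectation (W j) = 0"
    and ev: "\<And>j. expectation (\<lambda>\<omega>. (W j \<omega>)\<^sup>2) = v"
    and fin: "finite I" and a: "a > 0"
  shows "prob {\<omega>\<in>space M. \<bar>\<Sum>j\<in>I. W j \<omega>\<bar> \<ge> a} \<le> card I * v / a\<^sup>2"
proof -
  have rv[measurable]: "\<And>j. random_variable borel (W j)" using ind unfolding indep_vars_def by auto
  have int: "\<And>j. integrable M (W j)"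
    using sq square_integrable_imp_integrable rv by blast
  note S = sum_sq_moment[OF ind sq e0 ev fin]
  have E: "expectation (\<lambda>\<omega>. \<Sum>j\<in>I. W j \<omega>) = 0" using int e0 by (simp add: Bochner_Integration.integral_sum)
  have "prob {\<omega>\<in>space M. \<bar>(\<Sum>j\<in>I. W j \<omega>) - expectation (\<lambda>\<omega>. \<Sum>j\<in>I. W j \<omega>)\<bar> \<ge> a}
      \<le> variance (\<lambda>\<omega>. \<Sum>j\<in>I. W j \<omega>) / a\<^sup>2"
    by (rule Chebyshev_inequality) (use S a in auto)
  then show ?thesis using E S by simp
qed




lemma arith_block:
  fixes R v \<mu> :: real assumes R: "R \<ge> 1" and v: "v \<ge> 0" and mu: "\<mu> > 0"
  shows "R\<^sup>2 * v / (R\<^sup>2*\<mu>/2)\<^sup>2 + (2*R+1) * ((2*R+1) * v / (R\<^sup>2*\<mu>/2)\<^sup>2) \<le> 40 * v / \<mu>\<^sup>2 / R\<^sup>2"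
proof -
  define A where "A = (R\<^sup>2*\<mu>/2)\<^sup>2"
  have Apos: "A > 0" unfolding A_def using R mu by simp
  have e1: "R\<^sup>2 * v / A + (2*R+1) * ((2*R+1) * v / A) = (R\<^sup>2 + (2*R+1)\<^sup>2) * v / A"
    by (simp add: add_divide_distrib power2_eq_square algebra_simps)
  have "0 \<le> (5*R+1)*(R-1)" using R by simp
  then have "R\<^sup>2 + (2*R+1)\<^sup>2 \<le> 10 * R\<^sup>2" by (simp add: power2_eq_square algebra_simps)
  then have "(R\<^sup>2 + (2*R+1)\<^sup>2) * v / A \<le> (10 * R\<^sup>2) * v / A"
    using v Apos by (intro divide_right_mono mult_right_mono) auto
  also have "(10 * R\<^sup>2) * v / A = 40 * v / \<mu>\<^sup>2 / R\<^sup>2"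
    unfolding A_def using R mu by (simp add: power2_eq_square field_simps)
  finally show ?thesis using e1 unfolding A_def by simp
qed
lemma (in prob_space) tail_bound:
  fixes Z :: "nat \<Rightarrow> 'a \<Rightarrow> real" and \<mu> v \<delta> :: real
  assumes ind: "indep_vars (\<lambda>_. borel) Z UNIV"
    and sq: "\<And>j. integrable M (\<lambda>\<omega>. (Z j \<omega>)\<^sup>2)"
    and e: "\<And>j. expectation (Z j) = \<mu>"
    and var: "\<And>j. variance (Z j) = v"
    and mu: "\<mu> > 0" and d: "\<delta> > 0"
  shows "\<exists>K. \<forall>K'\<ge>K. prob {\<omega>\<in>space M. \<exists>m\<ge>K'. (\<Sum>j<m. Z j \<omega>) \<le> 0} \<le> \<delta>"
proof -
  have rvZ[measurable]: "\<And>j. random_variable borel (Z j)" using ind unfolding indep_vars_def by auto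
  have intZ: "\<And>j. integrable M (Z j)" using sq square_integrable_imp_integrable rvZ by blast
  define W where "W = (\<lambda>j \<omega>. Z j \<omega> - \<mu>)"
  have rvW[measurable]: "\<And>j. random_variable borel (W j)" unfolding W_def by measurable
  have indW: "indep_vars (\<lambda>_. borel) W UNIV"
    unfolding W_def using indep_vars_compose2[OF ind, of "\<lambda>i x. x - \<mu>" "\<lambda>_. borel"] by simp
  have sqW: "integrable M (\<lambda>\<omega>. (W j \<omega>)\<^sup>2)" for j
  proof -
    have eq: "(\<lambda>\<omega>. (W j \<omega>)\<^sup>2) = (\<lambda>\<omega>. (Z j \<omega>)\<^sup>2 - 2*\<mu>*Z j \<omega> + \<mu>\<^sup>2)"
      by (auto simp: W_def power2_diff fun_eq_iff)
    have "integrable M (\<lambda>\<omega>. (Z j \<omega>)\<^sup>2 - 2*\<mu>*Z j \<omega> + \<mu>\<^sup>2)" using sq intZ by auto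
    then show ?thesis unfolding eq .
  qed
  have eW: "expectation (W j) = 0" for j using intZ[of j] e[of j] unfolding W_def by (simp add: prob_space)
  have evW: "expectation (\<lambda>\<omega>. (W j \<omega>)\<^sup>2) = v" for j using var[of j] e[of j] unfolding W_def by simp
  have v0: "v \<ge> 0" using var[of 0] variance_positive by metis
  define a where "a r = real r ^ 2 * \<mu> / 2" for r :: nat
  have apos: "r \<ge> 1 \<Longrightarrow> a r > 0" for r unfolding a_def using mu by simp
  define F where "F r = {\<omega>\<in>space M. a r \<le> \<bar>\<Sum>j\<in>{..<r\<^sup>2}. W j \<omega>\<bar>} \<union>
      (\<Union>m\<in>{r\<^sup>2..<(Suc r)\<^sup>2}. {\<omega>\<in>space M. a r \<le> \<bar>\<Sum>j\<in>{r\<^sup>2..<m}. W j \<omega>\<bar>})" for r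
  have Fmeas: "F r \<in> events" for r unfolding F_def by measurable
  have cheb: "prob {\<omega>\<in>space M. a r \<le> \<bar>\<Sum>j\<in>I. W j \<omega>\<bar>} \<le> card I * v / (a r)\<^sup>2"
    if "finite I" "r \<ge> 1" for I r
    using sum_cheb[OF indW sqW eW evW that(1) apos[OF that(2)]] .
  define c where "c = 40 * v / \<mu>\<^sup>2"
  have Fb: "prob (F r) \<le> c / (real r)\<^sup>2" if r1: "r \<ge> 1" for r
  proof -
    let ?A = "{\<omega>\<in>space M. a r \<le> \<bar>\<Sum>j\<in>{..<r\<^sup>2}. W j \<omega>\<bar>}"
    let ?B = "\<lambda>m. {\<omega>\<in>space M. a r \<le> \<bar>\<Sum>j\<in>{r\<^sup>2..<m}. W j \<omega>\<bar>}"
    have Bm: "?B m \<in> events" for m by measurable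
    have s1: "prob (F r) \<le> prob ?A + prob (\<Union>m\<in>{r\<^sup>2..<(Suc r)\<^sup>2}. ?B m)"
      unfolding F_def by (rule measure_Un_le) (use Bm in auto)
    have s2: "prob ?A \<le> real (r\<^sup>2) * v / (a r)\<^sup>2" using cheb[of "{..<r\<^sup>2}" r] r1 by simp
    have s3: "prob (\<Union>m\<in>{r\<^sup>2..<(Suc r)\<^sup>2}. ?B m) \<le> (\<Sum>m\<in>{r\<^sup>2..<(Suc r)\<^sup>2}. prob (?B m))"
      by (rule finite_measure_subadditive_finite) (use Bm in auto)
    have s4: "(\<Sum>m\<in>{r\<^sup>2..<(Suc r)\<^sup>2}. prob (?B m)) \<le> real (card {r\<^sup>2..<(Suc r)\<^sup>2}) * (real (2*r+1) * v / (a r)\<^sup>2)"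
    proof (rule sum_bounded_above)
      fix m assume m: "m \<in> {r\<^sup>2..<(Suc r)\<^sup>2}"
      have "card {r\<^sup>2..<m} \<le> 2*r+1" using m by (auto simp: power2_eq_square)
      then have "real (card {r\<^sup>2..<m}) * v / (a r)\<^sup>2 \<le> real (2*r+1) * v / (a r)\<^sup>2"
        using v0 by (intro divide_right_mono mult_right_mono) auto
      then show "prob (?B m) \<le> real (2*r+1) * v / (a r)\<^sup>2"
        using cheb[of "{r\<^sup>2..<m}" r, OF finite_atLeastLessThan r1] by linarith
    qed
    have s5: "real (card {r\<^sup>2..<(Suc r)\<^sup>2}) = real (2*r+1)" by (simp add: power2_eq_square)
    have P1: "prob (F r) \<le> real (r\<^sup>2) * v / (a r)\<^sup>2 + real (2*r+1) * (real (2*r+1) * v / (a r)\<^sup>2)"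
      using s1 s2 s3 s4 unfolding s5 by linarith
    have "real (r\<^sup>2) * v / (a r)\<^sup>2 + real (2*r+1) * (real (2*r+1) * v / (a r)\<^sup>2) \<le> c / (real r)\<^sup>2"
    proof -
      have e1: "real (2*r+1) = 2*real r + 1" by simp
      have e2: "real (r\<^sup>2) = (real r)\<^sup>2" by simp
      show ?thesis unfolding e1 e2 a_def c_def by (rule arith_block) (use r1 mu v0 in auto)
    qed
    then show ?thesis using P1 by linarith
  qed
  define B where "B K = {\<omega>\<in>space M. \<exists>m\<ge>K. (\<Sum>j<m. Z j \<omega>) \<le> 0}" for K
  have Bmeas: "B K \<in> events" for K unfolding B_def by measurable
  have cover: "B (K\<^sup>2) \<subseteq> (\<Union>k. F (k + K))" if K1: "K \<ge> 1" for K
  proof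
    fix \<omega> assume "\<omega> \<in> B (K\<^sup>2)"
    then obtain m where \<omega>: "\<omega> \<in> space M" and m: "m \<ge> K\<^sup>2" "(\<Sum>j<m. Z j \<omega>) \<le> 0" unfolding B_def by auto
    obtain r where r: "r\<^sup>2 \<le> m" "m < (Suc r)\<^sup>2" using sqrt_block by blast
    have rK: "r \<ge> K"
    proof (rule ccontr)
      assume "\<not> r \<ge> K" then have "Suc r \<le> K" by simp
      then have h: "(Suc r)\<^sup>2 \<le> K\<^sup>2" by (rule power_mono) simp
      show False using h m(1) r(2) by linarith
    qed
    have spl: "{..<m} = {..<r\<^sup>2} \<union> {r\<^sup>2..<m}" using r by auto
    have sW: "(\<Sum>j<m. W j \<omega>) = (\<Sum>j<r\<^sup>2. W j \<omega>) + (\<Sum>j\<in>{r\<^sup>2..<m}. W j \<omega>)"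
      unfolding spl by (rule sum.union_disjoint) auto
    have "(\<Sum>j<m. W j \<omega>) = (\<Sum>j<m. Z j \<omega>) - real m * \<mu>" by (simp add: W_def sum_subtractf)
    also have "\<dots> \<le> - (real (r\<^sup>2) * \<mu>)"
    proof -
      have "real (r\<^sup>2) \<le> real m" using r(1) by linarith
      then have "real (r\<^sup>2) * \<mu> \<le> real m * \<mu>" using mu by (intro mult_right_mono) auto
      then show ?thesis using m(2) by linarith
    qed
    finally have le: "(\<Sum>j<r\<^sup>2. W j \<omega>) + (\<Sum>j\<in>{r\<^sup>2..<m}. W j \<omega>) \<le> - (2 * a r)"
      unfolding sW a_def by simp
    have "a r \<le> \<bar>\<Sum>j<r\<^sup>2. W j \<omega>\<bar> \<or> a r \<le> \<bar>\<Sum>j\<in>{r\<^sup>2..<m}. W j \<omega>\<bar>" using le by linarith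
    then have "\<omega> \<in> F r" unfolding F_def using \<omega> r by auto
    moreover have "r = (r - K) + K" using rK by simp
    ultimately show "\<omega> \<in> (\<Union>k. F (k + K))" by (metis UNIV_I UN_I)
  qed
  have summ: "summable (\<lambda>k. c / (real (k + K))\<^sup>2)" for K
    using summable_ignore_initial_segment[OF summable_inv_sq_shift[of c], of K] by simp
  obtain N where N: "\<forall>n\<ge>N. norm (\<Sum>i. c / (real (i + n))\<^sup>2) < \<delta>"
    using suminf_exist_split[OF d summable_inv_sq_shift[of c]] by blast
  define K where "K = max N 1"
  have K1: "K \<ge> 1" unfolding K_def by simp
  have pr: "prob (F (k + K)) \<le> c / (real (k + K))\<^sup>2" for k using Fb[of "k + K"] K1 by simp
  have summF: "summable (\<lambda>k. prob (F (k + K)))"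
    by (rule summable_comparison_test'[OF summ[of K], of 0]) (use pr in auto)
  have "prob (B (K\<^sup>2)) \<le> prob (\<Union>k. F (k + K))"
    by (rule finite_measure_mono[OF cover[OF K1]]) (use Fmeas in auto)
  also have "\<dots> \<le> (\<Sum>k. prob (F (k + K)))"
    by (rule finite_measure_subadditive_countably) (use Fmeas summF in auto)
  also have "\<dots> \<le> (\<Sum>k. c / (real (k + K))\<^sup>2)"
    by (rule suminf_le) (use pr summF summ in auto)
  also have "\<dots> < \<delta>"
  proof -
    have "norm (\<Sum>i. c / (real (i + K))\<^sup>2) < \<delta>" using N K_def by simp
    then show ?thesis by (metis abs_ge_self le_less_trans real_norm_def)
  qed
  finally have BK: "prob (B (K\<^sup>2)) < \<delta>" .
  have "\<forall>K'\<ge>K\<^sup>2. prob (B K') \<le> \<delta>"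
  proof (intro allI impI)
    fix K' assume "K' \<ge> K\<^sup>2"
    then have "B K' \<subseteq> B (K\<^sup>2)" unfolding B_def using le_trans by blast
    then have "prob (B K') \<le> prob (B (K\<^sup>2))" by (rule finite_measure_mono) (rule Bmeas)
    then show "prob (B K') \<le> \<delta>" using BK by simp
  qed
  then show ?thesis unfolding B_def by blast
qed



declare method_state.simps(2)[simp del]

lemma st1: "method_state f0 f1 x y c d k = (a, b) \<Longrightarrow> b < a \<Longrightarrow> (\<Sum>j<a. llr f0 f1 (x j)) > 0 \<Longrightarrow>
  method_state f0 f1 x y c d (Suc k) = (a + 1, b)"
  by (simp only: method_state.simps(2) Let_def prod.case if_True if_P)
lemma st2: "method_state f0 f1 x y c d k = (a, b) \<Longrightarrow> \<not> b < a \<Longrightarrow> a < b \<Longrightarrow> (\<Sum>j<b. llr f0 f1 (y j)) < 0 \<Longrightarrow>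
  method_state f0 f1 x y c d (Suc k) = (a + 1, b)"
proof -
  assume h: "method_state f0 f1 x y c d k = (a, b)" "\<not> b < a" "a < b" "(\<Sum>j<b. llr f0 f1 (y j)) < 0"
  then have h2: "\<not> (\<Sum>j<b. llr f0 f1 (y j)) > 0" by simp
  show ?thesis using h h2 by (simp only: method_state.simps(2) Let_def prod.case if_True if_False if_P if_not_P)
qed
lemma st3: "method_state f0 f1 x y c d k = (a, b) \<Longrightarrow> a = b \<Longrightarrow> c (a + b) = 1 \<Longrightarrow> (\<Sum>j<a. llr f0 f1 (x j)) > 0 \<Longrightarrow>
  method_state f0 f1 x y c d (Suc k) = (a + 1, b)"
proof -
  assume h: "method_state f0 f1 x y c d k = (a, b)" "a = b" "c (a + b) = 1" "(\<Sum>j<a. llr f0 f1 (x j)) > 0"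
  then have h2: "\<not> b < a" "\<not> a < b" by simp_all
  show ?thesis using h h2 by (simp only: method_state.simps(2) Let_def prod.case if_True if_False if_P if_not_P)
qed
lemma st4: "method_state f0 f1 x y c d k = (a, b) \<Longrightarrow> a = b \<Longrightarrow> c (a + b) \<noteq> 1 \<Longrightarrow> (\<Sum>j<b. llr f0 f1 (y j)) < 0 \<Longrightarrow>
  method_state f0 f1 x y c d (Suc k) = (a + 1, b)"
proof -
  assume h: "method_state f0 f1 x y c d k = (a, b)" "a = b" "c (a + b) \<noteq> 1" "(\<Sum>j<b. llr f0 f1 (y j)) < 0"
  then have h2: "\<not> b < a" "\<not> a < b" "\<not> (\<Sum>j<b. llr f0 f1 (y j)) > 0" by simp_all
  show ?thesis using h h2 by (simp only: method_state.simps(2) Let_def prod.case if_True if_False if_P if_not_P)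
qed

lemma ms_step: "method_state f0 f1 x y c d k = (a, b) \<Longrightarrow>
  method_state f0 f1 x y c d (Suc k) = (a + 1, b) \<or> method_state f0 f1 x y c d (Suc k) = (a, b + 1)"
proof -
  have gen: "\<And>P (u::nat\<times>nat) w. ((if P then u else w) = u \<or> (if P then u else w) = w) = True" by simp
  assume "method_state f0 f1 x y c d k = (a, b)"
  then show ?thesis by (simp only: method_state.simps(2) Let_def prod.case gen)
qed

lemma path_bound:
  assumes K1: "K \<ge> 1"
    and hx: "\<And>m. m \<ge> K \<Longrightarrow> (\<Sum>j<m. llr f0 f1 (x j)) > 0"
    and hy: "\<And>m. m \<ge> K \<Longrightarrow> (\<Sum>j<m. llr f0 f1 (y j)) < 0"
  shows "snd (method_state f0 f1 x y c d k) \<le> K \<and>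
         fst (method_state f0 f1 x y c d k) + snd (method_state f0 f1 x y c d k) = k + 2"
proof (induction k)
  case 0 then show ?case using K1 by simp
next
  case (Suc k)
  obtain a b where ab: "method_state f0 f1 x y c d k = (a, b)" by (cases "method_state f0 f1 x y c d k") auto
  have IH: "b \<le> K" "a + b = k + 2" using Suc ab by auto
  show ?case
  proof (cases "b < K")
    case True
    from ms_step[OF ab] show ?thesis
    proof
      assume "method_state f0 f1 x y c d (Suc k) = (a + 1, b)" then show ?thesis using IH by simp
    next
      assume "method_state f0 f1 x y c d (Suc k) = (a, b + 1)" then show ?thesis using IH True by simp
    qed
  next
    case False
    then have bK: "b = K" using IH by simp
    have sy: "(\<Sum>j<b. llr f0 f1 (y j)) < 0" using hy bK by simp
    have sx: "a \<ge> K \<Longrightarrow> (\<Sum>j<a. llr f0 f1 (x j)) > 0" using hx by simp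
    have st: "method_state f0 f1 x y c d (Suc k) = (a + 1, b)"
    proof (cases "b < a")
      case True
      then show ?thesis using st1[OF ab True] sx bK by simp
    next
      case F1: False
      show ?thesis
      proof (cases "a < b")
        case True
        show ?thesis using st2[OF ab F1 True sy] .
      next
        case F2: False
        then have aeq: "a = b" using F1 by simp
        show ?thesis
        proof (cases "c (a + b) = 1")
          case True
          then show ?thesis using st3[OF ab aeq True] sx aeq bK by simp
        next
          case F3: False
          show ?thesis using st4[OF ab aeq F3 sy] .
        qed
      qed
    qed
    show ?thesis using IH st by simp
  qed
qed




lemma ln_strict: fixes x :: real assumes x: "x > 0" "x \<noteq> 1" shows "ln x < x - 1"
proof -
  define y where "y = ln x"
  have y0: "y \<noteq> 0" unfolding y_def using x by simp
  have ey: "exp y = x" unfolding y_def using x by simp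
  have "1 + y < exp y"
  proof (cases "y < -2")
    case True
    then show ?thesis using exp_gt_zero[of y] by linarith
  next
    case False
    then have nn: "0 \<le> 1 + y/2" by simp
    have "1 + y/2 \<le> exp (y/2)" by (rule exp_ge_add_one_self)
    then have "(1 + y/2)\<^sup>2 \<le> (exp (y/2))\<^sup>2" using nn by (rule power_mono)
    also have "(exp (y/2))\<^sup>2 = exp y" by (simp add: power2_eq_square flip: exp_add)
    finally have "(1 + y/2)\<^sup>2 \<le> exp y" .
    moreover have "(1 + y/2)\<^sup>2 = 1 + y + y\<^sup>2/4" by (simp add: power2_eq_square field_simps)
    moreover have "y\<^sup>2 > 0" using y0 by simp
    ultimately show ?thesis by linarith
  qed
  then show ?thesis using ey y_def by simp
qed

lemma kl_pos:
  fixes g0 g1 L :: "real \<Rightarrow> real"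
  assumes d0: "is_density g0" and d1: "is_density g1"
    and pos: "AE u in density lborel (\<lambda>u. ennreal (g0 u)). g0 u > 0 \<and> g1 u > 0"
    and Lm: "L \<in> borel_measurable borel"
    and L: "AE u in density lborel (\<lambda>u. ennreal (g0 u)). L u = ln (g0 u / g1 u)"
    and sq: "integrable (density lborel (\<lambda>u. ennreal (g0 u))) (\<lambda>u. (L u)\<^sup>2)"
    and var: "prob_space.variance (density lborel (\<lambda>u. ennreal (g0 u))) L > 0"
  shows "(\<integral>u. L u \<partial>density lborel (\<lambda>u. ennreal (g0 u))) > 0"
proof -
  define P where "P = density lborel (\<lambda>u. ennreal (g0 u))"
  have g0nn: "\<And>x. 0 \<le> g0 x" and g0m[measurable]: "g0 \<in> borel_measurable borel"
    and g0i: "(\<integral>\<^sup>+ x. ennreal (g0 x) \<partial>lborel) = 1" using d0 unfolding is_density_def by auto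
  have g1nn: "\<And>x. 0 \<le> g1 x" and g1m[measurable]: "g1 \<in> borel_measurable borel"
    and g1i: "(\<integral>\<^sup>+ x. ennreal (g1 x) \<partial>lborel) = 1" using d1 unfolding is_density_def by auto
  have Lm'[measurable]: "L \<in> borel_measurable lborel" using Lm by simp
  have g0m'[measurable]: "g0 \<in> borel_measurable lborel" using g0m by simp
  have g1m'[measurable]: "g1 \<in> borel_measurable lborel" using g1m by simp
  interpret P: prob_space P
  proof
    show "emeasure P (space P) = 1" unfolding P_def using g0i by (simp add: emeasure_density)
  qed
  have LmP[measurable]: "L \<in> borel_measurable P" unfolding P_def by simp
  have sqP: "integrable P (\<lambda>u. (L u)\<^sup>2)" using sq unfolding P_def .
  have intL: "integrable P L" by (rule P.square_integrable_imp_integrable[OF LmP sqP])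
  define h where "h u = g1 u / g0 u" for u
  have hm[measurable]: "h \<in> borel_measurable lborel" unfolding h_def by measurable
  have hmP[measurable]: "h \<in> borel_measurable P" unfolding P_def by simp
  have g1int: "integrable lborel g1"
    by (rule integrableI_nonneg) (use g1nn g1i in auto)
  have bound: "norm (g0 x *\<^sub>R h x) \<le> norm (g1 x)" for x
    using g0nn[of x] g1nn[of x] unfolding h_def by (cases "g0 x = 0") auto
  have int0: "integrable lborel (\<lambda>x. g0 x *\<^sub>R h x)"
    by (rule Bochner_Integration.integrable_bound[OF g1int]) (use bound in auto)
  have inth: "integrable P h" unfolding P_def
    by (subst integrable_density) (use int0 g0nn in auto)
  have "integral\<^sup>L P h = (\<integral>x. g0 x *\<^sub>R h x \<partial>lborel)" unfolding P_def
    by (rule integral_density) (use g0nn in auto)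
  also have "\<dots> \<le> (\<integral>x. g1 x \<partial>lborel)"
  proof (rule integral_mono[OF int0 g1int])
    fix x show "g0 x *\<^sub>R h x \<le> g1 x" using bound[of x] g1nn[of x] by simp
  qed
  also have "(\<integral>x. g1 x \<partial>lborel) = 1"
    using integral_eq_nn_integral[of g1 lborel] g1nn g1i by simp
  finally have hle: "integral\<^sup>L P h \<le> 1" .
  have AEhL: "AE u in P. h u > 0 \<and> L u = - ln (h u)"
    using pos L unfolding P_def
  proof eventually_elim
    case (elim u)
    then show ?case unfolding h_def by (simp add: ln_div)
  qed
  define q where "q u = h u - 1 + L u" for u
  have qm[measurable]: "q \<in> borel_measurable P" unfolding q_def by measurable
  have AEq: "AE u in P. 0 \<le> q u"
    using AEhL
  proof eventually_elim
    case (elim u)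
    then show ?case unfolding q_def using ln_le_minus_one[of "h u"] by simp
  qed
  have intq: "integrable P q" unfolding q_def using inth intL by auto
  have Eq: "integral\<^sup>L P q = integral\<^sup>L P h - 1 + integral\<^sup>L P L"
    unfolding q_def using inth intL by (simp add: P.prob_space)
  show ?thesis
  proof (rule ccontr)
    assume "\<not> ?thesis"
    then have Lle: "integral\<^sup>L P L \<le> 0" unfolding P_def by simp
    have "integral\<^sup>L P q \<le> 0" using Eq Lle hle by simp
    moreover have "integral\<^sup>L P q \<ge> 0" by (rule integral_nonneg_AE[OF AEq])
    ultimately have "integral\<^sup>L P q = 0" by simp
    then have AE0: "AE u in P. q u = 0" using integral_nonneg_eq_0_iff_AE[OF intq AEq] by simp
    have AEL: "AE u in P. L u = 0"
      using AE0 AEhL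
    proof eventually_elim
      case (elim u)
      show ?case
      proof (cases "h u = 1")
        case True then show ?thesis using elim by simp
      next
        case False
        then have "ln (h u) < h u - 1" using ln_strict elim by simp
        then show ?thesis using elim unfolding q_def by simp
      qed
    qed
    have EL: "integral\<^sup>L P L = 0"
      using integral_cong_AE[OF LmP _ AEL] by simp
    have "P.variance L = (\<integral>u. 0 \<partial>P)"
      by (rule integral_cong_AE) (use AEL EL in auto)
    then have "P.variance L = 0" by simp
    then show False using var unfolding P_def by simp
  qed
qed




lemma (in prob_space) transfer:
  fixes Xn :: "'a \<Rightarrow> real" and g L :: "real \<Rightarrow> real"
  assumes dist: "distributed M lborel Xn (\<lambda>u. ennreal (g u))"
    and Lm: "L \<in> borel_measurable borel"
    and sq: "integrable (density lborel (\<lambda>u. ennreal (g u))) (\<lambda>u. (L u)\<^sup>2)"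
  shows "integrable M (\<lambda>\<omega>. (L (Xn \<omega>))\<^sup>2)"
    and "expectation (\<lambda>\<omega>. L (Xn \<omega>)) = (\<integral>u. L u \<partial>density lborel (\<lambda>u. ennreal (g u)))"
    and "variance (\<lambda>\<omega>. L (Xn \<omega>)) = prob_space.variance (density lborel (\<lambda>u. ennreal (g u))) L"
proof -
  have Xm[measurable]: "Xn \<in> measurable M lborel" using dist by (rule distributed_measurable)
  have Xm'[measurable]: "Xn \<in> borel_measurable M" using Xm by simp
  have D: "density lborel (\<lambda>u. ennreal (g u)) = distr M lborel Xn"
    using dist by (rule distributed_distr_eq_density[symmetric])
  have Lm'[measurable]: "L \<in> borel_measurable lborel" using Lm by simp
  show "integrable M (\<lambda>\<omega>. (L (Xn \<omega>))\<^sup>2)"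
    using sq unfolding D by (subst (asm) integrable_distr_eq) auto
  show E: "expectation (\<lambda>\<omega>. L (Xn \<omega>)) = (\<integral>u. L u \<partial>density lborel (\<lambda>u. ennreal (g u)))"
    unfolding D by (subst integral_distr) auto
  show "variance (\<lambda>\<omega>. L (Xn \<omega>)) = prob_space.variance (density lborel (\<lambda>u. ennreal (g u))) L"
    unfolding E unfolding D by (subst integral_distr) auto
qed

lemma density_prob_space:
  assumes d: "is_density g" shows "prob_space (density lborel (\<lambda>u. ennreal (g u)))"
proof
  have gm[measurable]: "g \<in> borel_measurable borel" and gi: "(\<integral>\<^sup>+ x. ennreal (g x) \<partial>lborel) = 1"
    using d unfolding is_density_def by auto
  show "emeasure (density lborel (\<lambda>u. ennreal (g u))) (space (density lborel (\<lambda>u. ennreal (g u)))) = 1"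
    using gi by (simp add: emeasure_density)
qed




theorem mainTheorem4:
  fixes M :: "'a measure"
    and f0 f1 :: "real \<Rightarrow> real"
    and X Y C D :: "nat \<Rightarrow> 'a \<Rightarrow> real"
  assumes "prob_space M"
    and dens0: "is_density f0" and dens1: "is_density f1"
    and cont0: "continuous_on UNIV f0" and cont1: "continuous_on UNIV f1"
    and neq: "f0 \<noteq> f1"
    and pos0: "AE u in density lborel (\<lambda>u. ennreal (f0 u)). f0 u > 0 \<and> f1 u > 0"
    and pos1: "AE u in density lborel (\<lambda>u. ennreal (f1 u)). f0 u > 0 \<and> f1 u > 0"
    and sq0: "integrable (density lborel (\<lambda>u. ennreal (f0 u))) (\<lambda>u. (llr f0 f1 u)\<^sup>2)"
    and sq1: "integrable (density lborel (\<lambda>u. ennreal (f1 u))) (\<lambda>u. (llr f0 f1 u)\<^sup>2)"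
    and var0: "prob_space.variance (density lborel (\<lambda>u. ennreal (f0 u))) (llr f0 f1) > 0"
    and var1: "prob_space.variance (density lborel (\<lambda>u. ennreal (f1 u))) (llr f0 f1) > 0"
    and distX: "\<And>n. distributed M lborel (X n) (\<lambda>u. ennreal (f0 u))"
    and distY: "\<And>n. distributed M lborel (Y n) (\<lambda>u. ennreal (f1 u))"
    and coinC: "\<And>n. prob_space.prob M {\<omega> \<in> space M. C n \<omega> = 1} = 1/2 \<and>
                     prob_space.prob M {\<omega> \<in> space M. C n \<omega> = 0} = 1/2"
    and coinD: "\<And>n. prob_space.prob M {\<omega> \<in> space M. D n \<omega> = 1} = 1/2 \<and>
                     prob_space.prob M {\<omega> \<in> space M. D n \<omega> = 0} = 1/2"
    and indep: "prob_space.indep_vars M (\<lambda>_. borel)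
                  (\<lambda>(s, n). case s of SrcX \<Rightarrow> X n | SrcY \<Rightarrow> Y n | SrcC \<Rightarrow> C n | SrcD \<Rightarrow> D n)
                  UNIV"
  shows "\<forall>\<epsilon>>0. (\<lambda>n. prob_space.prob M {\<omega> \<in> space M.
            \<bar>real (snd (method_counts f0 f1 (\<lambda>j. X j \<omega>) (\<lambda>j. Y j \<omega>) (\<lambda>j. C j \<omega>) (\<lambda>j. D j \<omega>) n))
             / real (fst (method_counts f0 f1 (\<lambda>j. X j \<omega>) (\<lambda>j. Y j \<omega>) (\<lambda>j. C j \<omega>) (\<lambda>j. D j \<omega>) n))
             - 0\<bar> > \<epsilon>}) \<longlonglongrightarrow> 0"
proof -
  interpret prob_space M by fact
  define P0 where "P0 = density lborel (\<lambda>u. ennreal (f0 u))"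
  define P1 where "P1 = density lborel (\<lambda>u. ennreal (f1 u))"
  have f0m[measurable]: "f0 \<in> borel_measurable borel" using dens0 unfolding is_density_def by auto
  have f1m[measurable]: "f1 \<in> borel_measurable borel" using dens1 unfolding is_density_def by auto
  have llr_eq: "llr f0 f1 = (\<lambda>u. ln (f0 u / f1 u))" by (rule ext) (simp add: llr_def)
  have llrm[measurable]: "llr f0 f1 \<in> borel_measurable borel" unfolding llr_eq by measurable
  define L1 where "L1 = (\<lambda>u. - llr f0 f1 u)"
  have L1m[measurable]: "L1 \<in> borel_measurable borel" unfolding L1_def by measurable
  interpret P1: prob_space P1 unfolding P1_def by (rule density_prob_space[OF dens1])
  have mu0: "(\<integral>u. llr f0 f1 u \<partial>P0) > 0" unfolding P0_def
    by (rule kl_pos[OF dens0 dens1 pos0 llrm _ sq0 var0]) (simp add: llr_def)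
  have sqL1: "integrable P1 (\<lambda>u. (L1 u)\<^sup>2)" using sq1 unfolding L1_def P1_def by simp
  have varL1: "P1.variance L1 = P1.variance (llr f0 f1)"
  proof -
    have "P1.expectation L1 = - P1.expectation (llr f0 f1)" unfolding L1_def by simp
    then have "\<And>u. (L1 u - P1.expectation L1)\<^sup>2 = (llr f0 f1 u - P1.expectation (llr f0 f1))\<^sup>2"
      unfolding L1_def by (simp add: power2_commute)
    then show ?thesis by simp
  qed
  have pos1': "AE u in P1. f1 u > 0 \<and> f0 u > 0" using pos1 unfolding P1_def by auto
  have AEL1: "AE u in P1. L1 u = ln (f1 u / f0 u)"
    using pos1' by eventually_elim (simp add: L1_def llr_def ln_div)
  have mu1: "(\<integral>u. L1 u \<partial>P1) > 0" unfolding P1_def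
    by (rule kl_pos[OF dens1 dens0 pos1'[unfolded P1_def] L1m AEL1[unfolded P1_def] sqL1[unfolded P1_def]])
       (use varL1 var1 in \<open>simp add: P1_def\<close>)
  define G where "G = (\<lambda>(s, n). case s of SrcX \<Rightarrow> X n | SrcY \<Rightarrow> Y n | SrcC \<Rightarrow> C n | SrcD \<Rightarrow> D n)"
  have indG: "indep_vars (\<lambda>_. borel) G UNIV" using indep unfolding G_def .
  have indX0: "indep_vars (\<lambda>_. borel) (\<lambda>j. G (SrcX, j)) UNIV"
    using indep_vars_reindex[OF indG, of "\<lambda>j. (SrcX, j)" UNIV] by (simp add: inj_on_def)
  have indY0: "indep_vars (\<lambda>_. borel) (\<lambda>j. G (SrcY, j)) UNIV"
    using indep_vars_reindex[OF indG, of "\<lambda>j. (SrcY, j)" UNIV] by (simp add: inj_on_def)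
  have indX: "indep_vars (\<lambda>_. borel) (\<lambda>j \<omega>. llr f0 f1 (X j \<omega>)) UNIV"
    using indep_vars_compose2[OF indX0, of "\<lambda>_. llr f0 f1" "\<lambda>_. borel"] by (simp add: G_def)
  have indY: "indep_vars (\<lambda>_. borel) (\<lambda>j \<omega>. L1 (Y j \<omega>)) UNIV"
    using indep_vars_compose2[OF indY0, of "\<lambda>_. L1" "\<lambda>_. borel"] by (simp add: G_def)
  note trX = transfer[OF distX llrm sq0]
  note trY = transfer[OF distY L1m sqL1[unfolded P1_def]]
  have tailX: "\<exists>K. \<forall>K'\<ge>K. prob {\<omega>\<in>space M. \<exists>m\<ge>K'. (\<Sum>j<m. llr f0 f1 (X j \<omega>)) \<le> 0} \<le> \<delta>"
    if "\<delta> > 0" for \<delta>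
    by (rule tail_bound[OF indX trX(1) trX(2) trX(3) mu0[unfolded P0_def] that])
  have tailY: "\<exists>K. \<forall>K'\<ge>K. prob {\<omega>\<in>space M. \<exists>m\<ge>K'. (\<Sum>j<m. L1 (Y j \<omega>)) \<le> 0} \<le> \<delta>"
    if "\<delta> > 0" for \<delta>
    by (rule tail_bound[OF indY trY(1) trY(2) trY(3) mu1[unfolded P1_def] that])
  have Xm[measurable]: "X j \<in> borel_measurable M" for j
    using distributed_measurable[OF distX[of j]] by simp
  have Ym[measurable]: "Y j \<in> borel_measurable M" for j
    using distributed_measurable[OF distY[of j]] by simp
  show ?thesis
  proof (intro allI impI)
    fix \<epsilon> :: real assume eps: "\<epsilon> > 0"
    let ?A = "\<lambda>n. {\<omega> \<in> space M.
            \<bar>real (snd (method_counts f0 f1 (\<lambda>j. X j \<omega>) (\<lambda>j. Y j \<omega>) (\<lambda>j. C j \<omega>) (\<lambda>j. D j \<omega>) n))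
             / real (fst (method_counts f0 f1 (\<lambda>j. X j \<omega>) (\<lambda>j. Y j \<omega>) (\<lambda>j. C j \<omega>) (\<lambda>j. D j \<omega>) n))
             - 0\<bar> > \<epsilon>}"
    show "(\<lambda>n. prob (?A n)) \<longlonglongrightarrow> 0"
    proof (rule LIMSEQ_I)
      fix r :: real assume r: "r > 0"
      obtain KX where KX: "\<forall>K'\<ge>KX. prob {\<omega>\<in>space M. \<exists>m\<ge>K'. (\<Sum>j<m. llr f0 f1 (X j \<omega>)) \<le> 0} \<le> r/3"
        using tailX[of "r/3"] r by auto
      obtain KY where KY: "\<forall>K'\<ge>KY. prob {\<omega>\<in>space M. \<exists>m\<ge>K'. (\<Sum>j<m. L1 (Y j \<omega>)) \<le> 0} \<le> r/3"
        using tailY[of "r/3"] r by auto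
      define K where "K = max (max KX KY) 1"
      define BX where "BX = {\<omega>\<in>space M. \<exists>m\<ge>K. (\<Sum>j<m. llr f0 f1 (X j \<omega>)) \<le> 0}"
      define BY where "BY = {\<omega>\<in>space M. \<exists>m\<ge>K. (\<Sum>j<m. L1 (Y j \<omega>)) \<le> 0}"
      have KXK: "KX \<le> K" and KYK: "KY \<le> K" unfolding K_def by simp_all
      have pBX: "prob BX \<le> r/3" unfolding BX_def using KX KXK by blast
      have pBY: "prob BY \<le> r/3" unfolding BY_def using KY KYK by blast
      have BXm: "BX \<in> events" unfolding BX_def by measurable
      have BYm: "BY \<in> events" unfolding BY_def by measurable
      define N where "N = K + nat \<lceil>real K / \<epsilon>\<rceil> + 2"
      have "\<forall>n\<ge>N. norm (prob (?A n) - 0) < r"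
      proof (intro allI impI)
        fix n assume nN: "n \<ge> N"
        have sub: "?A n \<subseteq> BX \<union> BY"
        proof
          fix \<omega> assume \<omega>A: "\<omega> \<in> ?A n"
          show "\<omega> \<in> BX \<union> BY"
          proof (rule ccontr)
            assume nb: "\<omega> \<notin> BX \<union> BY"
            have \<omega>s: "\<omega> \<in> space M" using \<omega>A by simp
            have hx: "(\<Sum>j<m. llr f0 f1 (X j \<omega>)) > 0" if mK: "m \<ge> K" for m
            proof -
              have "\<omega> \<notin> BX" using nb by simp
              then have "\<not> (\<Sum>j<m. llr f0 f1 (X j \<omega>)) \<le> 0" unfolding BX_def using \<omega>s mK by blast
              then show ?thesis by simp
            qed
            have hy: "\<And>m. m \<ge> K \<Longrightarrow> (\<Sum>j<m. llr f0 f1 (Y j \<omega>)) < 0"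
            proof -
              fix m assume "m \<ge> K"
              moreover have "\<omega> \<notin> BY" using nb by simp
              ultimately have "\<not> (\<Sum>j<m. L1 (Y j \<omega>)) \<le> 0" unfolding BY_def using \<omega>s by blast
              then have "(\<Sum>j<m. L1 (Y j \<omega>)) > 0" by simp
              then show "(\<Sum>j<m. llr f0 f1 (Y j \<omega>)) < 0" unfolding L1_def by (simp add: sum_negf)
            qed
            have K1: "K \<ge> 1" unfolding K_def by simp
            note pb = path_bound[OF K1, of f0 f1 "\<lambda>j. X j \<omega>" "\<lambda>j. Y j \<omega>", OF hx hy,
                of "\<lambda>j. C j \<omega>" "\<lambda>j. D j \<omega>" "n - 2"]
            define a where "a = fst (method_counts f0 f1 (\<lambda>j. X j \<omega>) (\<lambda>j. Y j \<omega>) (\<lambda>j. C j \<omega>) (\<lambda>j. D j \<omega>) n)"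
            define b where "b = snd (method_counts f0 f1 (\<lambda>j. X j \<omega>) (\<lambda>j. Y j \<omega>) (\<lambda>j. C j \<omega>) (\<lambda>j. D j \<omega>) n)"
            have n2: "n \<ge> 2" using nN unfolding N_def by simp
            have bK: "b \<le> K" and ab: "a + b = n" using pb n2 unfolding a_def b_def method_counts_def by auto
            have "a \<ge> nat \<lceil>real K / \<epsilon>\<rceil> + 2" using ab bK nN unfolding N_def by linarith
            then have aK: "real a \<ge> real K / \<epsilon>" and apos: "real a > 0"
              using real_nat_ceiling_ge[of "real K / \<epsilon>"] by linarith+
            have "real b / real a \<le> real K / real a" using bK apos by (simp add: divide_right_mono)
            also have "\<dots> \<le> \<epsilon>"
            proof -
              have "real K \<le> \<epsilon> * real a" using aK eps by (simp add: field_simps)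
              then show ?thesis using apos by (simp add: field_simps)
            qed
            finally have "real b / real a \<le> \<epsilon>" .
            moreover have "real b / real a \<ge> 0" by simp
            ultimately show False using \<omega>A unfolding a_def b_def by simp
          qed
        qed
        have "prob (?A n) \<le> prob (BX \<union> BY)" by (rule finite_measure_mono[OF sub]) (use BXm BYm in auto)
        also have "\<dots> \<le> prob BX + prob BY" by (rule measure_Un_le) (use BXm BYm in auto)
        finally have "prob (?A n) < r" using pBX pBY r by linarith
        then show "norm (prob (?A n) - 0) < r" by simp
      qed
      then show "\<exists>no. \<forall>n\<ge>no. norm (prob (?A n) - 0) < r" by blast
    qed
  qed
qed


end
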